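(* Let $G=(X,E)$ be a finite connected graph, $x,y,z$ three distinct vertices, $W=\chi_{\{x,y,z\}}$ and $H=\Delta-QW$. If there is an automorphism of $G$ of order three that permutes the wells $x,y,z$ cyclically, then there is no perfect tunneling from $y$ to $z$; in fact $TC(y,z)=4/9$.
   Context: $\Delta$ is the symmetrized Laplacian: $\Delta(v,v)=1$, $\Delta(v,w)=-1/\sqrt{d_vd_w}$ if $vw\in E$ ($d_v$ the degree), $0$ otherwise; $W$ is viewed as a diagonal matrix and $Q$ is a real parameter. Starting from vertex $u$, the state is $\varphi_t=e^{itH}\chi_u$ ($\chi_u$ the indicator of $u$), depending on $Q$; $TC(u,v)=\liminf_{Q\to\infty}\sup_{t\in[0,\infty)}|\varphi_t(v)|^2$. *)

theory Defs
  imports "HOL-Analysis.Analysis"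
begin

definition simple_graph :: "('a \<Rightarrow> 'a \<Rightarrow> bool) \<Rightarrow> bool" where
  "simple_graph E \<longleftrightarrow> (\<forall>a b. E a b = E b a) \<and> (\<forall>a. \<not> E a a)"

definition graph_connected :: "('a \<Rightarrow> 'a \<Rightarrow> bool) \<Rightarrow> bool" where
  "graph_connected E \<longleftrightarrow> (\<forall>v w. E\<^sup>*\<^sup>* v w)"

definition deg :: "('a \<Rightarrow> 'a \<Rightarrow> bool) \<Rightarrow> 'a \<Rightarrow> nat" where
  "deg E v = card {w. E v w}"

definition lap :: "('a \<Rightarrow> 'a \<Rightarrow> bool) \<Rightarrow> 'a \<Rightarrow> 'a \<Rightarrow> real" where
  "lap E v w = (if v = w then 1
                else if E v w then - 1 / sqrt (real (deg E v) * real (deg E w)) else 0)"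

definition ham :: "('a \<Rightarrow> 'a \<Rightarrow> bool) \<Rightarrow> 'a set \<Rightarrow> real \<Rightarrow> 'a \<Rightarrow> 'a \<Rightarrow> complex" where
  "ham E S Q v w = complex_of_real (lap E v w - (if v = w then Q * indicator S v else 0))"

definition mvec :: "('a::finite \<Rightarrow> 'a \<Rightarrow> complex) \<Rightarrow> ('a \<Rightarrow> complex) \<Rightarrow> 'a \<Rightarrow> complex" where
  "mvec M f = (\<lambda>i. \<Sum>j\<in>UNIV. M i j * f j)"

definition evol :: "('a::finite \<Rightarrow> 'a \<Rightarrow> bool) \<Rightarrow> 'a set \<Rightarrow> real \<Rightarrow> real \<Rightarrow> 'a \<Rightarrow> 'a \<Rightarrow> complex" where
  "evol E S Q t u v =
     (\<Sum>k. ((\<i> * complex_of_real t) ^ k / fact k) * ((mvec (ham E S Q) ^^ k) (indicator {u}) v))"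

definition TC :: "('a::finite \<Rightarrow> 'a \<Rightarrow> bool) \<Rightarrow> 'a set \<Rightarrow> 'a \<Rightarrow> 'a \<Rightarrow> ereal" where
  "TC E S u v = Liminf at_top (\<lambda>Q::real. SUP t\<in>{0..}. ereal ((cmod (evol E S Q t u v))\<^sup>2))"

definition graph_aut :: "('a \<Rightarrow> 'a \<Rightarrow> bool) \<Rightarrow> ('a \<Rightarrow> 'a) \<Rightarrow> bool" where
  "graph_aut E \<sigma> \<longleftrightarrow> bij \<sigma> \<and> (\<forall>a b. E a b = E (\<sigma> a) (\<sigma> b))"

end

theory Submission
  imports Defs "HOL-Analysis.Analysis"
begin


definition onb_eig :: "('v::euclidean_space \<Rightarrow> 'v) \<Rightarrow> 'v set \<Rightarrow> bool" where
 "onb_eig A B \<longleftrightarrow> finite B \<and> (\<forall>b\<in>B. \<forall>c\<in>B. inner b c = (if b = c then 1 else 0))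
     \<and> (\<forall>b\<in>B. \<exists>l. A b = l *\<^sub>R b)"

lemma spec_ext:
  fixes A :: "'v::euclidean_space \<Rightarrow> 'v"
  assumes lin: "linear A" and sa: "\<And>u w. inner (A u) w = inner u (A w)"
    and ob: "onb_eig A B" and v: "v \<noteq> 0" "\<forall>b\<in>B. inner v b = 0"
  shows "\<exists>u. u \<notin> B \<and> (\<forall>b\<in>B. inner u b = 0) \<and> norm u = 1 \<and> (\<exists>l. A u = l *\<^sub>R u)"
proof -
  define Sp where "Sp = (\<Inter>b\<in>B. {u. inner b u = 0})"
  define S where "S = Sp \<inter> sphere 0 1"
  have clSp: "closed Sp" unfolding Sp_def by (intro closed_INT ballI closed_hyperplane)
  have cS: "compact S" unfolding S_def using clSp compact_sphere
    by (metis compact_Int_closed inf_commute)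
  have vS: "v /\<^sub>R norm v \<in> S" using v unfolding S_def Sp_def by (auto simp: inner_commute)
  have cont: "continuous_on S (\<lambda>u. inner u (A u))"
    using lin by (intro continuous_intros linear_continuous_on) (simp add: linear_conv_bounded_linear)
  obtain u where uS: "u \<in> S" and umax: "\<And>w. w \<in> S \<Longrightarrow> inner w (A w) \<le> inner u (A u)"
    using continuous_attains_sup[OF cS _ cont] vS by blast
  define \<rho> where "\<rho> = inner u (A u)"
  have nu: "norm u = 1" using uS unfolding S_def by auto
  have uSp: "\<forall>b\<in>B. inner u b = 0" using uS unfolding S_def Sp_def by (auto simp: inner_commute)
  have quad: "inner w (A w) \<le> \<rho> * (norm w)\<^sup>2" if "\<forall>b\<in>B. inner w b = 0" for w
  proof (cases "w = 0")
    case True thus ?thesis using lin by (simp add: linear_0)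
  next
    case False
    have "w /\<^sub>R norm w \<in> S" using that False unfolding S_def Sp_def by (auto simp: inner_commute)
    hence "inner (w /\<^sub>R norm w) (A (w /\<^sub>R norm w)) \<le> \<rho>" using umax \<rho>_def by blast
    moreover have "inner (w /\<^sub>R norm w) (A (w /\<^sub>R norm w)) = inner w (A w) / (norm w)\<^sup>2"
      using lin by (simp add: linear_scale power2_eq_square field_simps)
    ultimately have "inner w (A w) / (norm w)\<^sup>2 \<le> \<rho>" by simp
    thus ?thesis using False by (simp add: divide_le_eq mult.commute)
  qed
  define w where "w = A u - \<rho> *\<^sub>R u"
  have eigB: "\<forall>b\<in>B. \<exists>l. A b = l *\<^sub>R b" using ob unfolding onb_eig_def by auto
  have wB: "\<forall>b\<in>B. inner w b = 0"
  proof
    fix b assume b: "b \<in> B"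
    then obtain l where l: "A b = l *\<^sub>R b" using eigB by blast
    have "inner (A u) b = inner u (A b)" by (rule sa)
    also have "\<dots> = 0" using l uSp b by simp
    finally show "inner w b = 0" using uSp b unfolding w_def by (simp add: inner_diff_left)
  qed
  have uu: "inner u u = 1" using nu by (simp add: power2_norm_eq_inner[symmetric])
  have wu: "inner w u = 0" unfolding w_def \<rho>_def using uu
    by (simp add: inner_diff_left inner_commute[of "A u" u])
  have wAu: "inner w (A u) = (norm w)\<^sup>2"
  proof -
    have "A u = w + \<rho> *\<^sub>R u" unfolding w_def by simp
    hence "inner w (A u) = inner w w + \<rho> * inner w u" by (simp add: inner_add_right)
    thus ?thesis using wu by (simp add: power2_norm_eq_inner)
  qed
  define c where "c = inner w (A w)"
  have key: "2 * \<epsilon> * (norm w)\<^sup>2 + \<epsilon>\<^sup>2 * c \<le> \<rho> * \<epsilon>\<^sup>2 * (norm w)\<^sup>2" for \<epsilon>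
  proof -
    have h: "\<forall>b\<in>B. inner (u + \<epsilon> *\<^sub>R w) b = 0" using uSp wB by (simp add: inner_add_left)
    have e1: "inner (u + \<epsilon> *\<^sub>R w) (A (u + \<epsilon> *\<^sub>R w)) = \<rho> + 2 * \<epsilon> * (norm w)\<^sup>2 + \<epsilon>\<^sup>2 * c"
    proof -
      have "A (u + \<epsilon> *\<^sub>R w) = A u + \<epsilon> *\<^sub>R A w" using lin by (simp add: linear_add linear_scale)
      moreover have "inner u (A w) = inner w (A u)" using sa[of w u] by (simp add: inner_commute)
      ultimately show ?thesis unfolding \<rho>_def c_def using wAu
        by (simp add: inner_add_left inner_add_right power2_eq_square algebra_simps)
    qed
    have e2: "(norm (u + \<epsilon> *\<^sub>R w))\<^sup>2 = 1 + \<epsilon>\<^sup>2 * (norm w)\<^sup>2"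
    proof -
      have "(norm (u + \<epsilon> *\<^sub>R w))\<^sup>2 = inner (u + \<epsilon> *\<^sub>R w) (u + \<epsilon> *\<^sub>R w)" by (simp add: power2_norm_eq_inner)
      also have "\<dots> = inner u u + 2*\<epsilon>*inner w u + \<epsilon>\<^sup>2 * inner w w"
        by (simp add: inner_add_left inner_add_right inner_commute[of u w] power2_eq_square algebra_simps)
      also have "\<dots> = 1 + \<epsilon>\<^sup>2 * (norm w)\<^sup>2" using uu wu by (simp add: power2_norm_eq_inner)
      finally show ?thesis .
    qed
    show ?thesis using quad[OF h] e1 e2 by (simp add: algebra_simps)
  qed
  have w0: "w = 0"
  proof (rule ccontr)
    assume "w \<noteq> 0"
    hence p: "(norm w)\<^sup>2 > 0" by simp
    define K where "K = \<bar>\<rho> * (norm w)\<^sup>2 - c\<bar> + 1"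
    have K: "K > 0" unfolding K_def by simp
    define \<epsilon> where "\<epsilon> = (norm w)\<^sup>2 / K"
    have ep: "\<epsilon> > 0" unfolding \<epsilon>_def using p K by simp
    have "2 * \<epsilon> * (norm w)\<^sup>2 \<le> \<epsilon> * (\<epsilon> * (\<rho> * (norm w)\<^sup>2 - c))"
      using key[of \<epsilon>] by (simp add: power2_eq_square algebra_simps)
    hence "2 * (norm w)\<^sup>2 \<le> \<epsilon> * (\<rho> * (norm w)\<^sup>2 - c)" using ep by simp
    also have "\<dots> \<le> \<epsilon> * K" using ep unfolding K_def by (intro mult_left_mono) auto
    also have "\<dots> = (norm w)\<^sup>2" unfolding \<epsilon>_def using K by simp
    finally show False using p by simp
  qed
  have "u \<notin> B"
  proof
    assume "u \<in> B" hence "inner u u = 0" using uSp by blast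
    thus False using nu by (simp add: power2_norm_eq_inner[symmetric])
  qed
  thus ?thesis using uSp nu w0 unfolding w_def by auto
qed

lemma onb_card: assumes "onb_eig A (B::'v::euclidean_space set)" shows "card B \<le> DIM('v)"
proof -
  have "pairwise orthogonal B" using assms unfolding onb_eig_def pairwise_def orthogonal_def by auto
  moreover have "0 \<notin> B" using assms unfolding onb_eig_def by force
  ultimately show ?thesis using independent_bound pairwise_orthogonal_independent by blast
qed

lemma spectral:
  fixes A :: "'v::euclidean_space \<Rightarrow> 'v"
  assumes lin: "linear A" and sa: "\<And>u w. inner (A u) w = inner u (A w)"
  shows "\<exists>B. onb_eig A B \<and> (\<forall>v. v = (\<Sum>b\<in>B. inner b v *\<^sub>R b))"
proof -
  define P where "P k \<longleftrightarrow> (\<exists>B. onb_eig A B \<and> card B = k)" for k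
  have P0: "P 0" unfolding P_def onb_eig_def by (intro exI[of _ "{}"]) auto
  have Pb: "\<forall>k. P k \<longrightarrow> k \<le> DIM('v)" unfolding P_def using onb_card by blast
  obtain k where Pk: "P k" and kmax: "\<forall>j. P j \<longrightarrow> j \<le> k"
    using Nat.ex_has_greatest_nat[OF P0 Pb] by blast
  obtain B where ob: "onb_eig A B" and cB: "card B = k" using Pk unfolding P_def by blast
  have fin: "finite B" and orth: "\<forall>b\<in>B. \<forall>c\<in>B. inner b c = (if b = c then 1 else 0)"
    and eig: "\<forall>b\<in>B. \<exists>l. A b = l *\<^sub>R b" using ob unfolding onb_eig_def by auto
  have "v = (\<Sum>b\<in>B. inner b v *\<^sub>R b)" for v
  proof (rule ccontr)
    define r where "r = v - (\<Sum>b\<in>B. inner b v *\<^sub>R b)"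
    assume "v \<noteq> (\<Sum>b\<in>B. inner b v *\<^sub>R b)"
    hence r0: "r \<noteq> 0" unfolding r_def by simp
    have rB: "\<forall>c\<in>B. inner r c = 0"
    proof
      fix c assume c: "c \<in> B"
      have "inner (\<Sum>b\<in>B. inner b v *\<^sub>R b) c = (\<Sum>b\<in>B. inner b v * inner b c)"
        by (simp add: inner_sum_left)
      also have "\<dots> = (\<Sum>b\<in>B. if b = c then inner c v else 0)"
        using orth c by (intro sum.cong) auto
      also have "\<dots> = inner c v" using fin c by simp
      finally have h: "inner (\<Sum>b\<in>B. inner b v *\<^sub>R b) c = inner c v" .
      have "inner r c = inner v c - inner (\<Sum>b\<in>B. inner b v *\<^sub>R b) c"
        unfolding r_def by (rule inner_diff_left)
      thus "inner r c = 0" using h by (simp add: inner_commute)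
    qed
    obtain u where u: "u \<notin> B" "\<forall>b\<in>B. inner u b = 0" "norm u = 1" "\<exists>l. A u = l *\<^sub>R u"
      using spec_ext[OF lin sa ob r0 rB] by blast
    have uu: "inner u u = 1" using u(3) by (simp add: power2_norm_eq_inner[symmetric])
    have "onb_eig A (insert u B)" unfolding onb_eig_def using fin orth eig u uu
      by (auto simp: inner_commute)
    hence "P (Suc k)" unfolding P_def using cB fin u(1) by (intro exI[of _ "insert u B"]) auto
    thus False using kmax by fastforce
  qed
  thus ?thesis using ob by blast
qed

definition ip :: "('a::finite \<Rightarrow> real) \<Rightarrow> ('a \<Rightarrow> real) \<Rightarrow> real" where
  "ip f g = (\<Sum>i\<in>UNIV. f i * g i)"
definition mv :: "('a::finite \<Rightarrow> 'a \<Rightarrow> real) \<Rightarrow> ('a \<Rightarrow> real) \<Rightarrow> 'a \<Rightarrow> real" where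
  "mv M f = (\<lambda>i. \<Sum>j\<in>UNIV. M i j * f j)"

lemma spectral_fun:
  fixes M :: "'a::finite \<Rightarrow> 'a \<Rightarrow> real"
  assumes sym: "\<And>i j. M i j = M j i"
  shows "\<exists>B lam. finite B \<and> (\<forall>b\<in>B. \<forall>c\<in>B. ip b c = (if b = c then 1 else 0))
     \<and> (\<forall>b\<in>B. mv M b = (\<lambda>i. lam b * b i)) \<and> (\<forall>f. f = (\<lambda>i. \<Sum>b\<in>B. ip b f * b i))"
proof -
  define A :: "real^'a \<Rightarrow> real^'a" where "A v = (\<chi> i. \<Sum>j\<in>UNIV. M i j * v$j)" for v
  have lin: "linear A"
    by (rule linearI) (simp_all add: A_def vec_eq_iff sum.distrib algebra_simps sum_distrib_left)
  have sa: "inner (A u) w = inner u (A w)" for u w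
  proof -
    have "inner (A u) w = (\<Sum>i\<in>UNIV. \<Sum>j\<in>UNIV. M i j * u$j * w$i)"
      by (simp add: A_def inner_vec_def sum_distrib_right)
    also have "\<dots> = (\<Sum>j\<in>UNIV. \<Sum>i\<in>UNIV. M i j * u$j * w$i)" by (rule sum.swap)
    also have "\<dots> = inner u (A w)"
      by (simp add: A_def inner_vec_def sum_distrib_left sym[of _ "_::'a"] mult_ac)
    finally show ?thesis .
  qed
  obtain B0 where ob: "onb_eig A B0" and comp: "\<forall>v. v = (\<Sum>b\<in>B0. inner b v *\<^sub>R b)"
    using spectral[OF lin sa] by blast
  have fin0: "finite B0" and orth0: "\<forall>b\<in>B0. \<forall>c\<in>B0. inner b c = (if b = c then 1 else 0)"
    and eig0: "\<forall>b\<in>B0. \<exists>l. A b = l *\<^sub>R b" using ob unfolding onb_eig_def by auto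
  define B where "B = vec_nth ` B0"
  have inj: "inj_on vec_nth B0" by (simp add: inj_on_def vec_nth_inject)
  have ipv: "ip (vec_nth b) (vec_nth c) = inner b c" for b c by (simp add: ip_def inner_vec_def)
  have mvA: "mv M (vec_nth b) = vec_nth (A b)" for b by (simp add: mv_def A_def fun_eq_iff)
  define lam where "lam b = (SOME l. mv M b = (\<lambda>i. l * b i))" for b
  have "finite B" unfolding B_def using fin0 by simp
  moreover have "\<forall>b\<in>B. \<forall>c\<in>B. ip b c = (if b = c then 1 else 0)"
    unfolding B_def using orth0 by (auto simp: vec_nth_inject ipv)
  moreover have "\<forall>b\<in>B. mv M b = (\<lambda>i. lam b * b i)"
  proof
    fix b assume "b \<in> B"
    then obtain b0 where b0: "b0 \<in> B0" "b = vec_nth b0" unfolding B_def by blast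
    then obtain l where "A b0 = l *\<^sub>R b0" using eig0 by blast
    hence "mv M b = (\<lambda>i. l * b i)" using b0 mvA by auto
    hence "\<exists>l. mv M b = (\<lambda>i. l * b i)" by blast
    thus "mv M b = (\<lambda>i. lam b * b i)" unfolding lam_def by (rule someI_ex)
  qed
  moreover have "\<forall>f. f = (\<lambda>i. \<Sum>b\<in>B. ip b f * b i)"
  proof (intro allI ext)
    fix f :: "'a \<Rightarrow> real" and i
    have "vec_lambda f $ i = (\<Sum>b\<in>B0. inner b (vec_lambda f) *\<^sub>R b) $ i"
      using comp by metis
    also have "\<dots> = (\<Sum>b\<in>B0. ip (vec_nth b) f * b $ i)"
      by (simp add: ip_def inner_vec_def)
    also have "\<dots> = (\<Sum>b\<in>B. ip b f * b i)"
      unfolding B_def by (simp add: sum.reindex[OF inj])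
    finally show "f i = (\<Sum>b\<in>B. ip b f * b i)" by simp
  qed
  ultimately show ?thesis by blast
qed



lemma ip_mv_sym: assumes "\<And>i j. M i j = M j i" shows "ip (mv M f) g = ip f (mv M g)"
proof -
  have "ip (mv M f) g = (\<Sum>i\<in>UNIV. \<Sum>j\<in>UNIV. M i j * f j * g i)"
    by (simp add: ip_def mv_def sum_distrib_right)
  also have "\<dots> = (\<Sum>j\<in>UNIV. \<Sum>i\<in>UNIV. M i j * f j * g i)" by (rule sum.swap)
  also have "\<dots> = ip f (mv M g)"
    by (simp add: ip_def mv_def sum_distrib_left assms[of _ "_::'a"] mult_ac)
  finally show ?thesis .
qed

locale tun =
  fixes E :: "'a::finite \<Rightarrow> 'a \<Rightarrow> bool" and x y z :: 'a and \<tau> :: "'a \<Rightarrow> 'a"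
  assumes sg: "simple_graph E" and conn: "graph_connected E"
    and xy: "x \<noteq> y" and yz: "y \<noteq> z" and xz: "x \<noteq> z"
    and aut: "graph_aut E \<tau>" and tx: "\<tau> x = y" and ty: "\<tau> y = z" and tz: "\<tau> z = x"
begin

abbreviation "W \<equiv> {x, y, z}"
definition h :: "real \<Rightarrow> 'a \<Rightarrow> 'a \<Rightarrow> real" where
  "h Q u v = lap E u v - (if u = v then Q * indicator W u else 0)"
definition nn :: real where "nn = real CARD('a)"

lemma Esym: "E a b = E b a" using sg unfolding simple_graph_def by auto
lemma Eirr: "\<not> E a a" using sg unfolding simple_graph_def by auto

lemma has_nb: "\<exists>w. E v w"
proof -
  obtain w where w: "w \<noteq> v" using xy by metis
  have "E\<^sup>*\<^sup>* v w" using conn unfolding graph_connected_def by blast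
  thus ?thesis using w by (cases rule: converse_rtranclpE) auto
qed

lemma deg_pos: "deg E v > 0"
proof -
  obtain w where "E v w" using has_nb by blast
  thus ?thesis unfolding deg_def by (auto simp: card_gt_0_iff)
qed

lemma lap_sym: "lap E u v = lap E v u"
  unfolding lap_def using Esym by (auto simp: mult.commute)

lemma lap_bound: "\<bar>lap E u v\<bar> \<le> 1"
proof -
  have a: "1 \<le> real (deg E u)" using deg_pos[of u] by simp
  have b: "1 \<le> real (deg E v)" using deg_pos[of v] by simp
  have "1 \<le> real (deg E u) * real (deg E v)" using mult_mono[OF a b] by simp
  hence "1 \<le> sqrt (real (deg E u) * real (deg E v))" by simp
  thus ?thesis unfolding lap_def by (auto simp: abs_div_pos)
qed

lemma h_sym: "h Q u v = h Q v u" unfolding h_def using lap_sym by auto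

lemma h_off: "u \<notin> W \<Longrightarrow> h Q u v = lap E u v" unfolding h_def by auto

lemma bij_tau: "bij \<tau>" and Etau: "E (\<tau> a) (\<tau> b) = E a b"
  using aut unfolding graph_aut_def by auto

lemma inj_tau: "inj \<tau>" using bij_tau bij_is_inj by blast

lemma tau_eq: "\<tau> a = \<tau> b \<longleftrightarrow> a = b" using inj_tau by (meson injD)

lemma deg_tau: "deg E (\<tau> v) = deg E v"
proof -
  have "{w. E (\<tau> v) w} = \<tau> ` {w. E v w}"
  proof (rule set_eqI)
    fix w
    obtain w' where w': "w = \<tau> w'" using surjD[OF bij_is_surj[OF bij_tau]] by blast
    have "w \<in> {w. E (\<tau> v) w} \<longleftrightarrow> E v w'" using w' Etau by simp
    also have "\<dots> \<longleftrightarrow> w \<in> \<tau> ` {w. E v w}" unfolding w' by (auto simp: image_iff tau_eq)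
    finally show "w \<in> {w. E (\<tau> v) w} \<longleftrightarrow> w \<in> \<tau> ` {w. E v w}" .
  qed
  moreover have "inj_on \<tau> {w. E v w}" using inj_on_subset[OF inj_tau subset_UNIV] .
  ultimately show ?thesis unfolding deg_def by (simp add: card_image)
qed

lemma W_tau: "\<tau> u \<in> W \<longleftrightarrow> u \<in> W"
proof
  assume "\<tau> u \<in> W"
  hence "\<tau> u = \<tau> z \<or> \<tau> u = \<tau> x \<or> \<tau> u = \<tau> y" using tx ty tz by auto
  thus "u \<in> W" unfolding tau_eq by auto
qed (use tx ty tz in auto)

lemma lap_tau: "lap E (\<tau> u) (\<tau> v) = lap E u v"
  unfolding lap_def using Etau deg_tau tau_eq by auto

lemma h_tau: "h Q (\<tau> u) (\<tau> v) = h Q u v"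
  unfolding h_def using lap_tau W_tau tau_eq by (auto simp: indicator_def)

lemma mv_tau: "mv (h Q) (f \<circ> \<tau>) = mv (h Q) f \<circ> \<tau>"
proof
  fix i
  have "mv (h Q) (f \<circ> \<tau>) i = (\<Sum>j\<in>UNIV. h Q (\<tau> i) (\<tau> j) * f (\<tau> j))"
    unfolding mv_def using h_tau by simp
  also have "\<dots> = (\<Sum>k\<in>UNIV. h Q (\<tau> i) k * f k)"
    using sum.reindex[OF inj_tau, of "\<lambda>k. h Q (\<tau> i) k * f k"] bij_tau
    by (simp add: bij_def)
  finally show "mv (h Q) (f \<circ> \<tau>) i = (mv (h Q) f \<circ> \<tau>) i" unfolding mv_def by simp
qed

lemma nn_ge3: "nn \<ge> 3"
proof -
  have "card W = 3" using xy yz xz by auto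
  hence "3 \<le> CARD('a)" by (metis card_mono finite subset_UNIV)
  thus ?thesis unfolding nn_def by simp
qed

lemma row_bound: "(mv (lap E) f u)\<^sup>2 \<le> nn * ip f f"
proof -
  have "(mv (lap E) f u)\<^sup>2 \<le> (\<Sum>j\<in>UNIV. (lap E u j)\<^sup>2) * (\<Sum>j\<in>UNIV. (f j)\<^sup>2)"
    unfolding mv_def by (rule Cauchy_Schwarz_ineq_sum)
  also have "\<dots> \<le> nn * (\<Sum>j\<in>UNIV. (f j)\<^sup>2)"
  proof (rule mult_right_mono)
    have "(\<Sum>j\<in>UNIV. (lap E u j)\<^sup>2) \<le> (\<Sum>j\<in>(UNIV::'a set). 1)"
      using lap_bound by (intro sum_mono) (simp add: abs_square_le_1)
    thus "(\<Sum>j\<in>UNIV. (lap E u j)\<^sup>2) \<le> nn" unfolding nn_def by simp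
  qed (auto intro: sum_nonneg)
  finally show ?thesis by (simp add: ip_def power2_eq_square)
qed

lemma lap_norm: "ip (mv (lap E) f) (mv (lap E) f) \<le> nn\<^sup>2 * ip f f"
proof -
  have "ip (mv (lap E) f) (mv (lap E) f) = (\<Sum>u\<in>UNIV. (mv (lap E) f u)\<^sup>2)"
    by (simp add: ip_def power2_eq_square)
  also have "\<dots> \<le> (\<Sum>u\<in>(UNIV::'a set). nn * ip f f)" by (intro sum_mono row_bound)
  also have "\<dots> = nn\<^sup>2 * ip f f" by (simp add: nn_def power2_eq_square)
  finally show ?thesis .
qed


lemma sum_split_W: "(\<Sum>u\<in>UNIV. f u) = (\<Sum>u\<in>W. f u) + (\<Sum>u\<in>-W. f u)"
proof -
  have "UNIV = W \<union> -W" by auto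
  hence "(\<Sum>u\<in>UNIV. f u) = (\<Sum>u\<in>W \<union> -W. f u)" by simp
  also have "\<dots> = (\<Sum>u\<in>W. f u) + (\<Sum>u\<in>-W. f u)" by (rule sum.union_disjoint) auto
  finally show ?thesis .
qed

lemma small:
  assumes eg: "mv (h Q) g = (\<lambda>i. \<mu> * g i)"
  shows "(\<mu>\<^sup>2 - nn\<^sup>2) * (\<Sum>u\<in>-W. (g u)\<^sup>2) \<le> nn\<^sup>2 * (\<Sum>u\<in>W. (g u)\<^sup>2)"
proof -
  have ipg: "ip g g = (\<Sum>u\<in>W. (g u)\<^sup>2) + (\<Sum>u\<in>-W. (g u)\<^sup>2)"
    unfolding ip_def using sum_split_W[of "\<lambda>u. (g u)\<^sup>2"] by (simp add: power2_eq_square)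
  have ipg0: "ip g g \<ge> 0" unfolding ip_def by (auto intro: sum_nonneg)
  have pt: "\<mu>\<^sup>2 * (g u)\<^sup>2 \<le> nn * ip g g" if u: "u \<in> -W" for u
  proof -
    have "\<mu> * g u = mv (lap E) g u" using fun_cong[OF eg, of u] u
      by (simp add: mv_def h_off)
    hence "\<mu>\<^sup>2 * (g u)\<^sup>2 = (mv (lap E) g u)\<^sup>2" by (simp add: power_mult_distrib[symmetric])
    thus ?thesis using row_bound by simp
  qed
  have "\<mu>\<^sup>2 * (\<Sum>u\<in>-W. (g u)\<^sup>2) = (\<Sum>u\<in>-W. \<mu>\<^sup>2 * (g u)\<^sup>2)" by (simp add: sum_distrib_left)
  also have "\<dots> \<le> (\<Sum>u\<in>-W. nn * ip g g)" by (intro sum_mono pt)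
  also have "\<dots> = real (card (-W)) * (nn * ip g g)" by simp
  also have "\<dots> \<le> nn * (nn * ip g g)"
  proof (rule mult_right_mono)
    show "real (card (-W)) \<le> nn" unfolding nn_def by (simp add: card_mono)
    show "0 \<le> nn * ip g g" using ipg0 nn_ge3 by simp
  qed
  finally show ?thesis using ipg by (simp add: power2_eq_square algebra_simps)
qed

lemma eig_orth:
  assumes "mv (h Q) g1 = (\<lambda>i. \<mu>1 * g1 i)" "mv (h Q) g2 = (\<lambda>i. \<mu>2 * g2 i)" "\<mu>1 \<noteq> \<mu>2"
  shows "ip g1 g2 = 0"
proof -
  have "\<mu>1 * ip g1 g2 = ip (mv (h Q) g1) g2" using assms(1) by (simp add: ip_def sum_distrib_left mult_ac)
  also have "\<dots> = ip g1 (mv (h Q) g2)" by (rule ip_mv_sym) (rule h_sym)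
  also have "\<dots> = \<mu>2 * ip g1 g2" using assms(2) by (simp add: ip_def sum_distrib_left mult_ac)
  finally show ?thesis using assms(3) by simp
qed

lemma ortho_contra:
  assumes e1: "mv (h Q) g1 = (\<lambda>i. \<mu>1 * g1 i)" and e2: "mv (h Q) g2 = (\<lambda>i. \<mu>2 * g2 i)"
    and ne: "\<mu>1 \<noteq> \<mu>2" and m1: "\<mu>1\<^sup>2 > 2 * nn\<^sup>2" and m2: "\<mu>2\<^sup>2 > 2 * nn\<^sup>2"
    and eqW: "\<forall>u\<in>W. g1 u = g2 u" and pos: "(\<Sum>u\<in>W. (g1 u)\<^sup>2) > 0"
  shows False
proof -
  define SW where "SW = (\<Sum>u\<in>W. (g1 u)\<^sup>2)"
  define N1 where "N1 = (\<Sum>u\<in>-W. (g1 u)\<^sup>2)"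
  define N2 where "N2 = (\<Sum>u\<in>-W. (g2 u)\<^sup>2)"
  have SW2: "(\<Sum>u\<in>W. (g2 u)\<^sup>2) = SW" unfolding SW_def using eqW by (intro sum.cong) auto
  have nn0: "nn\<^sup>2 > 0" using nn_ge3 by simp
  have b1: "N1 < SW"
  proof -
    have "(\<mu>1\<^sup>2 - nn\<^sup>2) * N1 \<le> nn\<^sup>2 * SW" using small[OF e1] unfolding N1_def SW_def .
    moreover have "N1 \<ge> 0" unfolding N1_def by (auto intro: sum_nonneg)
    moreover have "\<mu>1\<^sup>2 - nn\<^sup>2 > nn\<^sup>2" using m1 by simp
    ultimately have "nn\<^sup>2 * N1 \<le> nn\<^sup>2 * SW \<and> (nn\<^sup>2 * N1 < nn\<^sup>2 * SW \<or> N1 = 0)"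
      by (smt (verit) mult_right_mono mult_strict_right_mono)
    thus ?thesis using nn0 pos SW_def by (smt (verit) mult_le_cancel_left_pos)
  qed
  have b2: "N2 < SW"
  proof -
    have "(\<mu>2\<^sup>2 - nn\<^sup>2) * N2 \<le> nn\<^sup>2 * SW" using small[OF e2] SW2 unfolding N2_def by simp
    moreover have "N2 \<ge> 0" unfolding N2_def by (auto intro: sum_nonneg)
    moreover have "\<mu>2\<^sup>2 - nn\<^sup>2 > nn\<^sup>2" using m2 by simp
    ultimately have "nn\<^sup>2 * N2 \<le> nn\<^sup>2 * SW \<and> (nn\<^sup>2 * N2 < nn\<^sup>2 * SW \<or> N2 = 0)"
      by (smt (verit) mult_right_mono mult_strict_right_mono)
    thus ?thesis using nn0 pos SW_def by (smt (verit) mult_le_cancel_left_pos)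
  qed
  have "ip g1 g2 = (\<Sum>u\<in>W. g1 u * g2 u) + (\<Sum>u\<in>-W. g1 u * g2 u)"
    unfolding ip_def by (rule sum_split_W)
  also have "(\<Sum>u\<in>W. g1 u * g2 u) = SW" unfolding SW_def using eqW
    by (intro sum.cong) (auto simp: power2_eq_square)
  also have "(\<Sum>u\<in>-W. g1 u * g2 u) \<ge> (\<Sum>u\<in>-W. - ((g1 u)\<^sup>2 + (g2 u)\<^sup>2) / 2)"
  proof (intro sum_mono)
    fix u show "- ((g1 u)\<^sup>2 + (g2 u)\<^sup>2) / 2 \<le> g1 u * g2 u"
      using sum_squares_ge_zero[of "g1 u + g2 u" 0] by (simp add: power2_eq_square algebra_simps)
  qed
  hence "(\<Sum>u\<in>-W. g1 u * g2 u) \<ge> - (N1 + N2) / 2"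
    unfolding N1_def N2_def by (simp add: sum.distrib sum_divide_distrib[symmetric] sum_negf sum_subtractf)
  ultimately have "ip g1 g2 \<ge> SW - (N1 + N2) / 2" by linarith
  moreover have "(N1 + N2) / 2 < SW" using add_strict_mono[OF b1 b2] by (simp add: field_simps)
  ultimately have "ip g1 g2 > 0" by linarith
  thus False using eig_orth[OF e1 e2 ne] by simp
qed


lemma mv_h: "mv (h Q) f u = mv (lap E) f u - Q * indicator W u * f u"
proof -
  have "mv (h Q) f u = (\<Sum>j\<in>UNIV. lap E u j * f j - (if j = u then Q * indicator W u * f u else 0))"
    unfolding mv_def h_def by (intro sum.cong) (auto simp: algebra_simps)
  also have "\<dots> = mv (lap E) f u - Q * indicator W u * f u"
    by (simp add: sum_subtractf mv_def)
  finally show ?thesis .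
qed

lemma lap_expand:
  "mv (lap E) f u = f u - (\<Sum>j\<in>{j. E u j}. f j / sqrt (real (deg E u) * real (deg E j)))"
proof -
  have "mv (lap E) f u = (\<Sum>j\<in>UNIV. (if j = u then f u else 0)
      - (if j \<in> {j. E u j} then f j / sqrt (real (deg E u) * real (deg E j)) else 0))"
    unfolding mv_def lap_def using Eirr by (intro sum.cong) auto
  also have "\<dots> = f u - (\<Sum>j\<in>UNIV. (if j \<in> {j. E u j} then f j / sqrt (real (deg E u) * real (deg E j)) else 0))"
    by (simp add: sum_subtractf)
  also have "(\<Sum>j\<in>UNIV. (if j \<in> {j. E u j} then f j / sqrt (real (deg E u) * real (deg E j)) else 0))
      = (\<Sum>j\<in>{j. E u j}. f j / sqrt (real (deg E u) * real (deg E j)))"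
    using sum.inter_restrict[of UNIV "\<lambda>j. f j / sqrt (real (deg E u) * real (deg E j))" "{j. E u j}"] by simp
  finally show ?thesis .
qed

lemma no_pos_eig:
  assumes eg: "mv (h Q) \<psi> = (\<lambda>i. \<mu> * \<psi> i)" and mu: "\<mu> < 0"
    and py: "\<psi> y = 1" and px: "\<psi> x = 0" and pz: "\<psi> z = 0"
  shows False
proof -
  define S where "S u = (\<Sum>j\<in>{j. E u j}. \<psi> j / sqrt (real (deg E u) * real (deg E j)))" for u
  have eqg: "\<mu> * \<psi> u = \<psi> u - S u - Q * indicator W u * \<psi> u" for u
    using fun_cong[OF eg, of u] mv_h[of Q \<psi> u] lap_expand[of \<psi> u] unfolding S_def by simp
  have eqN: "(1 - \<mu>) * \<psi> u = S u" if "u \<notin> W" for u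
    using eqg[of u] that by (simp add: algebra_simps)
  have eqW: "S u = 0" if "\<psi> u = 0" for u
    using eqg[of u] that by simp
  have dpos: "real (deg E u) > 0" for u using deg_pos by simp
  have Wnn: "\<psi> u \<ge> 0" if "u \<in> W" for u using that px py pz by auto
  have nonneg: "\<psi> u \<ge> 0" if "u \<notin> W" for u
  proof (rule ccontr)
    assume "\<not> \<psi> u \<ge> 0"
    hence u0: "\<psi> u < 0" by simp
    define \<phi> where "\<phi> v = \<psi> v / sqrt (real (deg E v))" for v
    define m where "m = Min (\<phi> ` (-W))"
    have fin: "finite (\<phi> ` (-W))" by simp
    have ne: "\<phi> ` (-W) \<noteq> {}" using that by auto
    have "m \<in> \<phi> ` (-W)" using Min_in[OF fin ne] unfolding m_def .
    then obtain n0 where n0: "n0 \<in> -W" "\<phi> n0 = m" by (metis imageE)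
    have mle: "m \<le> \<phi> v" if "v \<in> -W" for v unfolding m_def using that fin by simp
    have "\<phi> u < 0" unfolding \<phi>_def using u0 dpos[of u] by (simp add: divide_neg_pos)
    hence m0: "m < 0" using mle[of u] that by simp
    define d0 where "d0 = real (deg E n0)"
    define s0 where "s0 = sqrt d0"
    have s0p: "s0 > 0" unfolding s0_def d0_def using dpos by simp
    have s0sq: "s0 * s0 = d0" unfolding s0_def d0_def using dpos[of n0] by simp
    have tm: "\<psi> j / sqrt (real (deg E n0) * real (deg E j)) \<ge> m / s0" for j
    proof -
      have "\<psi> j / sqrt (real (deg E n0) * real (deg E j)) = \<phi> j / s0"
        unfolding \<phi>_def s0_def d0_def by (simp add: real_sqrt_mult)
      moreover have "m \<le> \<phi> j"
      proof (cases "j \<in> W")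
        case True
        hence "\<phi> j \<ge> 0" unfolding \<phi>_def using Wnn[OF True] by simp
        thus ?thesis using m0 by simp
      next
        case False thus ?thesis using mle by simp
      qed
      ultimately show ?thesis using s0p by (simp add: divide_right_mono)
    qed
    have "S n0 \<ge> (\<Sum>j\<in>{j. E n0 j}. m / s0)" unfolding S_def by (intro sum_mono tm)
    also have "(\<Sum>j\<in>{j. E n0 j}. m / s0) = d0 * (m / s0)" unfolding d0_def deg_def by simp
    also have "d0 * (m / s0) = s0 * m" using s0sq s0p by (simp add: field_simps)
    finally have "S n0 \<ge> s0 * m" .
    moreover have "\<psi> n0 = s0 * m" using n0(2) s0p unfolding \<phi>_def s0_def d0_def by (simp add: field_simps)
    moreover have "(1 - \<mu>) * \<psi> n0 = S n0" using eqN n0(1) by simp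
    ultimately have "(1 - \<mu>) * (s0 * m) \<ge> s0 * m" by simp
    hence "- \<mu> * (s0 * m) \<ge> 0" by (simp add: algebra_simps)
    moreover have "s0 * m < 0" using s0p m0 by (simp add: mult_pos_neg)
    moreover have "\<mu> * (s0 * m) > 0" using mu \<open>s0 * m < 0\<close> by (simp add: mult_neg_neg)
    ultimately show False by simp
  qed
  have allnn: "\<psi> u \<ge> 0" for u using nonneg Wnn by (cases "u \<in> W") auto
  have term_le: "\<psi> v / sqrt (real (deg E u) * real (deg E v)) \<le> S u" if "E u v" for u v
    unfolding S_def using that allnn dpos
    by (intro member_le_sum) (auto intro: divide_nonneg_pos)
  define R where "R a b \<longleftrightarrow> (a = y \<or> a \<notin> W) \<and> E a b" for a b
  have reach: "(w \<notin> W \<longrightarrow> \<psi> w > 0) \<and> (w \<in> W \<longrightarrow> w = y)" if "R\<^sup>*\<^sup>* y w" for w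
    using that
  proof (induction rule: rtranclp_induct)
    case base thus ?case by simp
  next
    case (step v w)
    have Rvw: "v = y \<or> v \<notin> W" "E v w" using step(2) unfolding R_def by auto
    have pv: "\<psi> v > 0" using Rvw(1) step(3) py by auto
    have "\<psi> v / sqrt (real (deg E w) * real (deg E v)) > 0" using pv dpos by simp
    hence Sw: "S w > 0" using term_le[of w v] Rvw(2) Esym by (meson less_le_trans)
    show ?case
    proof (intro conjI impI)
      assume "w \<notin> W"
      hence "(1 - \<mu>) * \<psi> w > 0" using eqN Sw by simp
      thus "\<psi> w > 0" using mu by (simp add: zero_less_mult_iff)
    next
      assume wW: "w \<in> W"
      show "w = y"
      proof (rule ccontr)
        assume "w \<noteq> y"
        hence "\<psi> w = 0" using wW px pz by auto
        thus False using eqW Sw by simp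
      qed
    qed
  qed
  have "R\<^sup>*\<^sup>* y v" if "E\<^sup>*\<^sup>* y v" for v
    using that
  proof (induction rule: rtranclp_induct)
    case base thus ?case by simp
  next
    case (step v w)
    have "v = y \<or> v \<notin> W" using reach[OF step(3)] by auto
    hence "R v w" unfolding R_def using step(2) by simp
    thus ?case using step(3) by simp
  qed
  moreover have "E\<^sup>*\<^sup>* y x" using conn unfolding graph_connected_def by blast
  ultimately have "R\<^sup>*\<^sup>* y x" by blast
  thus False using reach[of x] xy by auto
qed

end


lemma mv_lin: "mv M (\<lambda>i. \<Sum>b\<in>S. c b * b i) = (\<lambda>i. \<Sum>b\<in>S. c b * mv M b i)"
proof
  fix i
  have "mv M (\<lambda>i. \<Sum>b\<in>S. c b * b i) i = (\<Sum>j\<in>UNIV. \<Sum>b\<in>S. M i j * (c b * b j))"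
    by (simp add: mv_def sum_distrib_left)
  also have "\<dots> = (\<Sum>b\<in>S. \<Sum>j\<in>UNIV. M i j * (c b * b j))" by (rule sum.swap)
  also have "\<dots> = (\<Sum>b\<in>S. c b * mv M b i)" by (simp add: mv_def sum_distrib_left mult_ac)
  finally show "mv M (\<lambda>i. \<Sum>b\<in>S. c b * b i) i = (\<Sum>b\<in>S. c b * mv M b i)" .
qed

lemma ip_sum_right: "ip f (\<lambda>i. \<Sum>b\<in>S. c b * b i) = (\<Sum>b\<in>S. c b * ip f b)"
proof -
  have "ip f (\<lambda>i. \<Sum>b\<in>S. c b * b i) = (\<Sum>i\<in>UNIV. \<Sum>b\<in>S. c b * (f i * b i))"
    by (simp add: ip_def sum_distrib_left mult_ac)
  also have "\<dots> = (\<Sum>b\<in>S. \<Sum>i\<in>UNIV. c b * (f i * b i))" by (rule sum.swap)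
  finally show ?thesis by (simp add: ip_def sum_distrib_left)
qed

lemma ip_comm: "ip f g = ip g f" by (simp add: ip_def mult.commute)

locale spec = tun +
  fixes Q :: real and B :: "('a \<Rightarrow> real) set" and lam :: "('a \<Rightarrow> real) \<Rightarrow> real"
  assumes finB: "finite B" and orthB: "\<forall>b\<in>B. \<forall>c\<in>B. ip b c = (if b = c then 1 else 0)"
   and eigB: "\<forall>b\<in>B. mv (h Q) b = (\<lambda>i. lam b * b i)"
   and compB: "\<forall>f. f = (\<lambda>i. \<Sum>b\<in>B. ip b f * b i)"
begin

definition Pr :: "real \<Rightarrow> ('a \<Rightarrow> real) \<Rightarrow> 'a \<Rightarrow> real" where
  "Pr l f = (\<lambda>i. \<Sum>b\<in>{b\<in>B. lam b = l}. ip b f * b i)"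
definition K :: "real \<Rightarrow> 'a \<Rightarrow> 'a \<Rightarrow> real" where
  "K l u v = (\<Sum>b\<in>{b\<in>B. lam b = l}. b u * b v)"
abbreviation "Lam \<equiv> lam ` B"

lemma comp_pt: "f i = (\<Sum>b\<in>B. ip b f * b i)"
  using compB by metis

lemma regroup: "(\<Sum>l\<in>Lam. \<Sum>b\<in>{b\<in>B. lam b = l}. g b) = (\<Sum>b\<in>B. g b)"
  using sum.image_gen[OF finB, of g lam] by simp

lemma parseval: "ip f g = (\<Sum>b\<in>B. ip b f * ip b g)"
proof -
  have "ip f g = ip g f" by (rule ip_comm)
  also have "\<dots> = ip g (\<lambda>i. \<Sum>b\<in>B. ip b f * b i)" using compB by metis
  also have "\<dots> = (\<Sum>b\<in>B. ip b f * ip g b)" by (rule ip_sum_right)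
  finally show ?thesis by (simp add: ip_comm)
qed

lemma ip_b_mv: "b \<in> B \<Longrightarrow> ip b (mv (h Q) f) = lam b * ip b f"
proof -
  assume b: "b \<in> B"
  have "ip b (mv (h Q) f) = ip (mv (h Q) b) f" by (rule ip_mv_sym[symmetric]) (rule h_sym)
  also have "\<dots> = lam b * ip b f" using eigB b by (simp add: ip_def sum_distrib_left mult_ac)
  finally show ?thesis .
qed

lemma eigP: "mv (h Q) (Pr l f) = (\<lambda>i. l * Pr l f i)"
proof -
  have "mv (h Q) (Pr l f) = (\<lambda>i. \<Sum>b\<in>{b\<in>B. lam b = l}. ip b f * mv (h Q) b i)"
    unfolding Pr_def by (rule mv_lin)
  also have "\<dots> = (\<lambda>i. l * Pr l f i)" unfolding Pr_def using eigB
    by (intro ext) (simp add: sum_distrib_left mult_ac)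
  finally show ?thesis .
qed

lemma P_eig:
  assumes eg: "mv (h Q) g = (\<lambda>i. \<mu> * g i)"
  shows "Pr l g = (if l = \<mu> then g else (\<lambda>i. 0))"
proof -
  have z: "ip b g = 0" if "b \<in> B" "lam b \<noteq> \<mu>" for b
    using eig_orth[of Q b "lam b" g \<mu>] eigB that eg by simp
  show ?thesis
  proof (cases "l = \<mu>")
    case True
    have "Pr l g i = g i" for i
    proof -
      have "Pr l g i = (\<Sum>b\<in>B. if lam b = l then ip b g * b i else 0)"
        unfolding Pr_def using finB by (simp add: sum.inter_filter)
      also have "\<dots> = (\<Sum>b\<in>B. ip b g * b i)" using z True by (intro sum.cong) auto
      also have "\<dots> = g i" using comp_pt by metis
      finally show ?thesis .
    qed
    thus ?thesis using True by auto
  next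
    case False
    thus ?thesis unfolding Pr_def using z by (auto intro!: sum.neutral)
  qed
qed

lemma sum_P: "f i = (\<Sum>l\<in>Lam. Pr l f i)"
  unfolding Pr_def using regroup[of "\<lambda>b. ip b f * b i"] comp_pt by metis

lemma P_lin_sum: "Pr l (\<lambda>i. \<Sum>m\<in>M. g m i) = (\<lambda>i. \<Sum>m\<in>M. Pr l (g m) i)"
proof
  fix i
  have "Pr l (\<lambda>i. \<Sum>m\<in>M. g m i) i = (\<Sum>b\<in>{b\<in>B. lam b = l}. \<Sum>m\<in>M. ip b (g m) * b i)"
    unfolding Pr_def by (simp add: ip_def sum_distrib_left sum_distrib_right) (simp add: sum.swap[of _ UNIV])
  also have "\<dots> = (\<Sum>m\<in>M. Pr l (g m) i)" unfolding Pr_def by (rule sum.swap)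
  finally show "Pr l (\<lambda>i. \<Sum>m\<in>M. g m i) i = (\<Sum>m\<in>M. Pr l (g m) i)" .
qed


lemma P_tau: "Pr l (f \<circ> \<tau>) = Pr l f \<circ> \<tau>"
proof -
  have ft: "f \<circ> \<tau> = (\<lambda>i. \<Sum>m\<in>Lam. (Pr m f \<circ> \<tau>) i)"
    using sum_P[of f] by (auto simp: fun_eq_iff)
  have eg: "mv (h Q) (Pr m f \<circ> \<tau>) = (\<lambda>i. m * (Pr m f \<circ> \<tau>) i)" for m
    using mv_tau[of Q "Pr m f"] eigP[of m f] by (simp add: o_def)
  have "Pr l (f \<circ> \<tau>) = (\<lambda>i. \<Sum>m\<in>Lam. Pr l (Pr m f \<circ> \<tau>) i)"
    by (subst ft) (rule P_lin_sum)
  also have "\<dots> = (\<lambda>i. \<Sum>m\<in>Lam. if l = m then (Pr m f \<circ> \<tau>) i else 0)"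
    using P_eig[OF eg] by (intro ext sum.cong) auto
  also have "\<dots> = Pr l f \<circ> \<tau>"
  proof (cases "l \<in> Lam")
    case True thus ?thesis using finB by (auto simp: fun_eq_iff)
  next
    case False
    have e: "{b\<in>B. lam b = l} = {}" using False by auto
    have "(\<lambda>i. \<Sum>m\<in>Lam. if l = m then (Pr m f \<circ> \<tau>) i else 0) = (\<lambda>i. 0)"
      using False by (intro ext sum.neutral) auto
    moreover have "Pr l f \<circ> \<tau> = (\<lambda>i. 0)" unfolding Pr_def e by (simp add: fun_eq_iff)
    ultimately show ?thesis by simp
  qed
  finally show ?thesis .
qed

lemma K_P: "K l u v = Pr l (indicator {v}) u"
proof -
  have "ip b (indicator {v}) = b v" for b
    by (simp add: ip_def indicator_def if_distrib cong: if_cong)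
  thus ?thesis unfolding K_def Pr_def by (simp add: mult.commute)
qed

lemma K_tau: "K l (\<tau> u) (\<tau> v) = K l u v"
proof -
  have ind: "indicator {\<tau> v} \<circ> \<tau> = (indicator {v} :: 'a \<Rightarrow> real)"
    by (auto simp: fun_eq_iff indicator_def tau_eq)
  have "K l (\<tau> u) (\<tau> v) = (Pr l (indicator {\<tau> v}) \<circ> \<tau>) u" by (simp add: K_P)
  also have "\<dots> = Pr l (indicator {\<tau> v} \<circ> \<tau>) u" by (simp add: P_tau)
  also have "\<dots> = K l u v" by (simp add: ind K_P)
  finally show ?thesis .
qed

lemma K_sym: "K l u v = K l v u" unfolding K_def by (simp add: mult.commute)

definition p :: "real \<Rightarrow> real" where "p l = K l y y"
definition q :: "real \<Rightarrow> real" where "q l = K l y z"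

lemma Kvals: "K l x x = p l" "K l y y = p l" "K l z z = p l"
  "K l x y = q l" "K l y x = q l" "K l y z = q l" "K l z y = q l" "K l x z = q l" "K l z x = q l"
proof -
  have zz: "K l z z = K l y y" using K_tau[of l y y] ty by simp
  have xx: "K l x x = K l z z" using K_tau[of l z z] tz by simp
  have zx: "K l z x = K l y z" using K_tau[of l y z] ty tz by simp
  have xy: "K l x y = K l z x" using K_tau[of l z x] tz tx by simp
  show "K l x x = p l" "K l y y = p l" "K l z z = p l" unfolding p_def using zz xx by auto
  show "K l x y = q l" "K l y z = q l" "K l z x = q l" unfolding q_def using zx xy by auto
  show "K l y x = q l" "K l z y = q l" "K l x z = q l" unfolding q_def using zx xy K_sym by metis+
qed

definition Sv :: "real \<Rightarrow> real" where "Sv l = (\<Sum>b\<in>{b\<in>B. lam b = l}. (b x + b y + b z)\<^sup>2)"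
definition Dv :: "real \<Rightarrow> real" where "Dv l = (\<Sum>b\<in>{b\<in>B. lam b = l}. (b y - b z)\<^sup>2)"

lemma Sv_eq: "Sv l = 3 * p l + 6 * q l"
proof -
  have "Sv l = K l x x + K l y y + K l z z + 2 * K l x y + 2 * K l y z + 2 * K l x z"
    unfolding Sv_def K_def by (simp add: power2_eq_square algebra_simps sum.distrib sum_distrib_left)
  thus ?thesis using Kvals by simp
qed

lemma Dv_eq: "Dv l = 2 * p l - 2 * q l"
proof -
  have "Dv l = K l y y + K l z z - 2 * K l y z"
    unfolding Dv_def K_def by (simp add: power2_eq_square algebra_simps sum.distrib sum_distrib_left sum_subtractf)
  thus ?thesis using Kvals by simp
qed

lemma q_eq: "q l = Sv l / 9 - Dv l / 6" unfolding Sv_eq Dv_eq by (simp add: field_simps)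

lemma Sv_nn: "Sv l \<ge> 0" unfolding Sv_def by (auto intro: sum_nonneg)
lemma Dv_nn: "Dv l \<ge> 0" unfolding Dv_def by (auto intro: sum_nonneg)

definition sv :: "'a \<Rightarrow> real" where "sv u = (if u \<in> W then 1 else 0)"

lemma Wset: "{i. i = x \<or> i = y \<or> i = z} = W" by auto
definition dv :: "'a \<Rightarrow> real" where "dv u = (if u = y then 1 else if u = z then -1 else 0)"

lemma ip_sv: "ip b sv = b x + b y + b z"
proof -
  have "ip b sv = (\<Sum>u\<in>W. b u)" unfolding ip_def sv_def
    by (simp add: if_distrib sum.If_cases Wset cong: if_cong)
  thus ?thesis using xy yz xz by simp
qed

lemma ip_dv: "ip b dv = b y - b z"
proof -
  have "ip b dv = (\<Sum>u\<in>UNIV. (if u = y then b u else 0) - (if u = z then b u else 0))"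
    unfolding ip_def dv_def using yz by (intro sum.cong) auto
  thus ?thesis by (simp add: sum_subtractf)
qed

lemma ip_sv_sv: "ip sv sv = 3"
proof -
  have "ip sv sv = real (card W)" unfolding ip_def sv_def by (simp add: if_distrib sum.If_cases Wset cong: if_cong)
  thus ?thesis using xy yz xz by simp
qed

lemma ip_dv_dv: "ip dv dv = 2" using ip_dv[of dv] unfolding dv_def using yz by simp

lemma sum_Sv: "(\<Sum>l\<in>Lam. Sv l) = 3"
  unfolding Sv_def regroup using parseval[of sv sv] ip_sv ip_sv_sv by (simp add: power2_eq_square)

lemma sum_Dv: "(\<Sum>l\<in>Lam. Dv l) = 2"
  unfolding Dv_def regroup using parseval[of dv dv] ip_dv ip_dv_dv by (simp add: power2_eq_square)


lemma sumW: "(\<Sum>u\<in>W. f u) = f x + f y + f z" using xy yz xz by (simp add: add.assoc)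

lemma svvals: "sv x = 1" "sv y = 1" "sv z = 1" unfolding sv_def by auto
lemma dvvals: "dv x = 0" "dv y = 1" "dv z = -1" unfolding dv_def using xy yz xz by auto

lemma Pr_K: "Pr l f u = (\<Sum>w\<in>UNIV. f w * K l u w)"
proof -
  have "Pr l f u = (\<Sum>b\<in>{b\<in>B. lam b = l}. \<Sum>w\<in>UNIV. f w * (b u * b w))"
    unfolding Pr_def ip_def by (simp add: sum_distrib_left sum_distrib_right mult_ac)
  also have "\<dots> = (\<Sum>w\<in>UNIV. f w * K l u w)"
    unfolding K_def by (subst sum.swap) (simp add: sum_distrib_left)
  finally show ?thesis .
qed

lemma Pr_W: assumes "\<forall>w. w \<notin> W \<longrightarrow> f w = 0"
  shows "Pr l f u = f x * K l u x + f y * K l u y + f z * K l u z"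
proof -
  have "Pr l f u = (\<Sum>w\<in>W. f w * K l u w) + (\<Sum>w\<in>-W. f w * K l u w)"
    unfolding Pr_K by (rule sum_split_W)
  also have "(\<Sum>w\<in>-W. f w * K l u w) = 0" using assms by (intro sum.neutral) auto
  finally show ?thesis by (simp add: sumW)
qed

lemma mv_scale: "mv M (\<lambda>i. c * f i) = (\<lambda>i. c * mv M f i)"
  by (simp add: mv_def sum_distrib_left mult_ac)

lemma eig_scaled: "mv (h Q) (\<lambda>i. c * Pr l f i) = (\<lambda>i. l * (c * Pr l f i))"
  using eigP[of l f] by (simp add: mv_scale mult_ac)

lemma conc:
  assumes supp: "\<forall>u. u \<notin> W \<longrightarrow> f u = 0" and Qp: "Q > 0"
  shows "(\<Sum>b\<in>B. if lam b \<ge> -Q/2 then (ip b f)\<^sup>2 else 0) \<le> 4 * nn\<^sup>2 * ip f f / Q\<^sup>2"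
proof -
  have Lf: "mv (lap E) f = (\<lambda>i. mv (h Q) f i + Q * f i)"
  proof
    fix u
    have "indicator W u * f u = f u" using supp by (cases "u \<in> W") auto
    thus "mv (lap E) f u = mv (h Q) f u + Q * f u" using mv_h[of Q f u] by (simp add: mult.assoc)
  qed
  have ipL: "ip b (mv (lap E) f) = (lam b + Q) * ip b f" if b: "b \<in> B" for b
  proof -
    have "ip b (mv (lap E) f) = ip b (mv (h Q) f) + Q * ip b f"
      unfolding Lf by (simp add: ip_def sum.distrib sum_distrib_left algebra_simps)
    thus ?thesis using ip_b_mv[OF b] by (simp add: algebra_simps)
  qed
  have tot: "(\<Sum>b\<in>B. ((lam b + Q) * ip b f)\<^sup>2) \<le> nn\<^sup>2 * ip f f"
  proof -
    have "ip (mv (lap E) f) (mv (lap E) f) = (\<Sum>b\<in>B. ((lam b + Q) * ip b f)\<^sup>2)"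
      unfolding parseval[of "mv (lap E) f"] using ipL by (intro sum.cong) (auto simp: power2_eq_square)
    thus ?thesis using lap_norm[of f] by simp
  qed
  have tw: "(if lam b \<ge> -Q/2 then (ip b f)\<^sup>2 else 0) \<le> 4 / Q\<^sup>2 * ((lam b + Q) * ip b f)\<^sup>2" for b
  proof (cases "lam b \<ge> -Q/2")
    case True
    define a where "a = lam b + Q"
    define c where "c = ip b f"
    have "Q \<le> 2 * a" unfolding a_def using True by simp
    hence "Q\<^sup>2 \<le> (2 * a)\<^sup>2" using Qp by (intro power_mono) auto
    hence "c\<^sup>2 * Q\<^sup>2 \<le> c\<^sup>2 * (4 * a\<^sup>2)" by (intro mult_left_mono) (auto simp: power_mult_distrib)
    hence "c\<^sup>2 \<le> 4 / Q\<^sup>2 * (a * c)\<^sup>2" using Qp by (simp add: field_simps power_mult_distrib)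
    thus ?thesis using True unfolding a_def c_def by simp
  qed simp
  have "(\<Sum>b\<in>B. if lam b \<ge> -Q/2 then (ip b f)\<^sup>2 else 0) \<le> (\<Sum>b\<in>B. 4 / Q\<^sup>2 * ((lam b + Q) * ip b f)\<^sup>2)"
    by (intro sum_mono tw)
  also have "\<dots> = 4 / Q\<^sup>2 * (\<Sum>b\<in>B. ((lam b + Q) * ip b f)\<^sup>2)" by (simp add: sum_distrib_left)
  also have "\<dots> \<le> 4 / Q\<^sup>2 * (nn\<^sup>2 * ip f f)" using tot Qp by (intro mult_left_mono) auto
  finally show ?thesis by simp
qed

lemma sq_big: assumes "Q > 0" "Q\<^sup>2 > 8 * nn\<^sup>2" "l < -Q/2" shows "l\<^sup>2 > 2 * nn\<^sup>2"
proof -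
  have "Q / 2 \<le> - l" using assms by simp
  hence "(Q/2)\<^sup>2 \<le> (-l)\<^sup>2" using assms(1) by (intro power_mono) auto
  thus ?thesis using assms(2) by (simp add: power_divide)
qed

lemma uniqS:
  assumes Qp: "Q > 0" and Qb: "Q\<^sup>2 > 8 * nn\<^sup>2" and l1: "l1 < -Q/2" and l2: "l2 < -Q/2"
    and s1: "Sv l1 > 0" and s2: "Sv l2 > 0"
  shows "l1 = l2"
proof (rule ccontr)
  assume ne: "l1 \<noteq> l2"
  define g where "g l = (\<lambda>i. (3 / Sv l) * Pr l sv i)" for l
  have supp: "\<forall>w. w \<notin> W \<longrightarrow> sv w = 0" unfolding sv_def by simp
  have gW: "g l u = 1" if "u \<in> W" "Sv l > 0" for u l
  proof -
    have "Pr l sv u = p l + 2 * q l" using Pr_W[OF supp, of l u] that(1) Kvals[of l] svvals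
      by auto
    thus ?thesis unfolding g_def using that(2) Sv_eq[of l] by (simp add: field_simps)
  qed
  have e1: "mv (h Q) (g l1) = (\<lambda>i. l1 * g l1 i)" unfolding g_def by (rule eig_scaled)
  have e2: "mv (h Q) (g l2) = (\<lambda>i. l2 * g l2 i)" unfolding g_def by (rule eig_scaled)
  have eqW: "\<forall>u\<in>W. g l1 u = g l2 u" using gW s1 s2 by simp
  have "(\<Sum>u\<in>W. (g l1 u)\<^sup>2) = (\<Sum>u\<in>W. 1)" using gW s1 by (intro sum.cong) auto
  hence pos: "(\<Sum>u\<in>W. (g l1 u)\<^sup>2) > 0" by (simp only: sumW)
  show False using ortho_contra[OF e1 e2 ne sq_big[OF Qp Qb l1] sq_big[OF Qp Qb l2] eqW pos] .
qed

lemma uniqD: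
  assumes Qp: "Q > 0" and Qb: "Q\<^sup>2 > 8 * nn\<^sup>2" and l1: "l1 < -Q/2" and l2: "l2 < -Q/2"
    and s1: "Dv l1 > 0" and s2: "Dv l2 > 0"
  shows "l1 = l2"
proof (rule ccontr)
  assume ne: "l1 \<noteq> l2"
  define g where "g l = (\<lambda>i. (2 / Dv l) * Pr l dv i)" for l
  have supp: "\<forall>w. w \<notin> W \<longrightarrow> dv w = 0" unfolding dv_def by auto
  have gW: "g l u = dv u" if "u \<in> W" "Dv l > 0" for u l
  proof -
    have "Pr l dv u = K l u y - K l u z" using Pr_W[OF supp, of l u] dvvals
      by simp
    moreover have "u = x \<or> u = y \<or> u = z" using that(1) by auto
    ultimately show ?thesis unfolding g_def using that(2) Dv_eq[of l] Kvals[of l] xy yz xz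
      by (auto simp: field_simps dv_def)
  qed
  have e1: "mv (h Q) (g l1) = (\<lambda>i. l1 * g l1 i)" unfolding g_def by (rule eig_scaled)
  have e2: "mv (h Q) (g l2) = (\<lambda>i. l2 * g l2 i)" unfolding g_def by (rule eig_scaled)
  have eqW: "\<forall>u\<in>W. g l1 u = g l2 u" using gW s1 s2 by simp
  have "(\<Sum>u\<in>W. (g l1 u)\<^sup>2) = (\<Sum>u\<in>W. (dv u)\<^sup>2)" using gW s1 by (intro sum.cong) auto
  hence pos: "(\<Sum>u\<in>W. (g l1 u)\<^sup>2) > 0" by (simp add: sumW dvvals)
  show False using ortho_contra[OF e1 e2 ne sq_big[OF Qp Qb l1] sq_big[OF Qp Qb l2] eqW pos] .
qed

lemma distinct_SD:
  assumes l: "l < 0" and s: "Sv l > 0" and d: "Dv l > 0"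
  shows False
proof -
  define F where "F = p l + 2 * q l"
  define G where "G = p l - q l"
  have F: "F > 0" using s Sv_eq[of l] unfolding F_def by simp
  have G: "G > 0" using d Dv_eq[of l] unfolding G_def by simp
  define a where "a = (p l + q l) / (F * G)"
  define c where "c = - q l / (F * G)"
  define v where "v u = (if u = y then a else if u = x \<or> u = z then c else 0)" for u
  have supp: "\<forall>w. w \<notin> W \<longrightarrow> v w = 0" unfolding v_def by auto
  define \<psi> where "\<psi> = Pr l v"
  have vals: "\<psi> u = v x * K l u x + v y * K l u y + v z * K l u z" for u
    unfolding \<psi>_def by (rule Pr_W[OF supp])
  have vx: "v x = c" "v y = a" "v z = c" unfolding v_def using xy yz xz by auto
  have FG: "F * G \<noteq> 0" using F G by simp
  have py: "\<psi> y = 1"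
  proof -
    have "\<psi> y = c * q l + a * p l + c * q l" using vals[of y] vx Kvals[of l] by simp
    also have "\<dots> = (p l * (p l + q l) - 2 * q l * q l) / (F * G)" unfolding a_def c_def using FG
      by (simp add: field_simps)
    also have "\<dots> = 1" using FG unfolding F_def G_def by (simp add: field_simps)
    finally show ?thesis .
  qed
  have px: "\<psi> x = 0"
  proof -
    have "\<psi> x = c * p l + a * q l + c * q l" using vals[of x] vx Kvals[of l] by simp
    thus ?thesis unfolding a_def c_def using FG by (simp add: field_simps)
  qed
  have pz: "\<psi> z = 0"
  proof -
    have "\<psi> z = c * q l + a * q l + c * p l" using vals[of z] vx Kvals[of l] by simp
    thus ?thesis unfolding a_def c_def using FG by (simp add: field_simps)
  qed
  show False using no_pos_eig[of Q \<psi> l] eigP[of l v] l py px pz unfolding \<psi>_def by blast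
qed

end


lemma pick:
  fixes V :: "real \<Rightarrow> real"
  assumes fin: "finite L" and nn: "\<And>l. V l \<ge> 0" and tot: "(\<Sum>l\<in>L. V l) = T"
    and con: "(\<Sum>l\<in>L. if l \<ge> c then V l else 0) \<le> \<delta>" and dT: "\<delta> < T"
    and un: "\<And>l1 l2. l1 < c \<Longrightarrow> l2 < c \<Longrightarrow> V l1 > 0 \<Longrightarrow> V l2 > 0 \<Longrightarrow> l1 = l2"
  shows "\<exists>\<alpha>\<in>L. \<alpha> < c \<and> V \<alpha> > 0 \<and> (\<Sum>l\<in>L-{\<alpha>}. V l) \<le> \<delta>"
proof -
  have ex: "\<exists>\<alpha>\<in>L. \<alpha> < c \<and> V \<alpha> > 0"
  proof (rule ccontr)
    assume "\<not> ?thesis"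
    hence "\<forall>l\<in>L. V l = (if l \<ge> c then V l else 0)"
    proof (intro ballI)
      fix l assume l: "l \<in> L" and ne: "\<not> (\<exists>\<alpha>\<in>L. \<alpha> < c \<and> V \<alpha> > 0)"
      show "V l = (if l \<ge> c then V l else 0)"
      proof (cases "l \<ge> c")
        case False thus ?thesis using ne l nn[of l] by (auto simp: not_le)
      qed simp
    qed
    hence "(\<Sum>l\<in>L. V l) = (\<Sum>l\<in>L. if l \<ge> c then V l else 0)" by (intro sum.cong) auto
    thus False using tot con dT by simp
  qed
  then obtain \<alpha> where a: "\<alpha> \<in> L" "\<alpha> < c" "V \<alpha> > 0" by blast
  have "(\<Sum>l\<in>L-{\<alpha>}. V l) = (\<Sum>l\<in>L-{\<alpha>}. if l \<ge> c then V l else 0)"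
  proof (intro sum.cong refl)
    fix l assume l: "l \<in> L - {\<alpha>}"
    show "V l = (if l \<ge> c then V l else 0)"
    proof (cases "l \<ge> c")
      case False
      hence "\<not> V l > 0" using un[of l \<alpha>] a l by auto
      thus ?thesis using nn[of l] False by simp
    qed simp
  qed
  also have "\<dots> \<le> (\<Sum>l\<in>L. if l \<ge> c then V l else 0)"
    using fin nn by (intro sum_mono2) auto
  finally show ?thesis using a con by auto
qed

context spec begin

lemma ham_h: "ham E W Q i j = complex_of_real (h Q i j)"
  unfolding ham_def h_def by simp

lemma ip_ind: "ip b (indicator {u}) = b u"
  by (simp add: ip_def indicator_def if_distrib cong: if_cong)

lemma pow_rep: "(mvec (ham E W Q) ^^ k) (indicator {u}) = (\<lambda>v. \<Sum>b\<in>B. complex_of_real (lam b ^ k * b u * b v))"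
proof (induction k)
  case 0
  show ?case
  proof
    fix v
    have e1: "(\<Sum>b\<in>B. ip b (indicator {u}) * b v) = (\<Sum>b\<in>B. b u * b v)" by (simp add: ip_ind)
    have "(indicator {u} v :: real) = (\<Sum>b\<in>B. b u * b v)" using comp_pt[of "indicator {u}" v] e1 by simp
    hence "(indicator {u} v :: complex) = complex_of_real (\<Sum>b\<in>B. b u * b v)"
      by (metis of_real_indicator)
    thus "(mvec (ham E W Q) ^^ 0) (indicator {u}) v = (\<Sum>b\<in>B. complex_of_real (lam b ^ 0 * b u * b v))" by simp
  qed
next
  case (Suc k)
  show ?case
  proof
    fix i
    have "(mvec (ham E W Q) ^^ Suc k) (indicator {u}) i
        = (\<Sum>j\<in>UNIV. complex_of_real (h Q i j) * (\<Sum>b\<in>B. complex_of_real (lam b ^ k * b u * b j)))"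
    proof -
      have "(mvec (ham E W Q) ^^ Suc k) (indicator {u}) i = mvec (ham E W Q) ((mvec (ham E W Q) ^^ k) (indicator {u})) i"
        by simp
      also have "\<dots> = mvec (ham E W Q) (\<lambda>v. \<Sum>b\<in>B. complex_of_real (lam b ^ k * b u * b v)) i"
        by (simp only: Suc.IH)
      finally show ?thesis by (simp add: mvec_def ham_h)
    qed
    also have "\<dots> = complex_of_real (\<Sum>b\<in>B. lam b ^ k * b u * mv (h Q) b i)"
      by (simp add: mv_def sum_distrib_left sum.swap[of _ UNIV] mult_ac)
    also have "\<dots> = complex_of_real (\<Sum>b\<in>B. lam b ^ Suc k * b u * b i)"
      using eigB by (intro arg_cong[where f=complex_of_real] sum.cong) auto
    finally show "(mvec (ham E W Q) ^^ Suc k) (indicator {u}) i = (\<Sum>b\<in>B. complex_of_real (lam b ^ Suc k * b u * b i))"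
      by simp
  qed
qed

lemma evol_rep: "evol E W Q t u v = (\<Sum>b\<in>B. cis (t * lam b) * complex_of_real (b u * b v))"
proof -
  have trm: "(\<i> * complex_of_real t) ^ k / fact k * (mvec (ham E W Q) ^^ k) (indicator {u}) v
      = (\<Sum>b\<in>B. complex_of_real (b u * b v) * ((\<i> * complex_of_real (t * lam b)) ^ k /\<^sub>R fact k))" for k
    unfolding pow_rep by (simp add: sum_distrib_left power_mult_distrib scaleR_conv_of_real divide_inverse mult_ac)
  have sm: "(\<lambda>k. complex_of_real (b u * b v) * ((\<i> * complex_of_real (t * lam b)) ^ k /\<^sub>R fact k))
      sums (complex_of_real (b u * b v) * exp (\<i> * complex_of_real (t * lam b)))" for b
    by (intro sums_mult exp_converges)
  have "(\<lambda>k. (\<i> * complex_of_real t) ^ k / fact k * (mvec (ham E W Q) ^^ k) (indicator {u}) v)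
      sums (\<Sum>b\<in>B. complex_of_real (b u * b v) * exp (\<i> * complex_of_real (t * lam b)))"
    unfolding trm by (intro sums_sum sm)
  hence "evol E W Q t u v = (\<Sum>b\<in>B. complex_of_real (b u * b v) * exp (\<i> * complex_of_real (t * lam b)))"
    unfolding evol_def by (rule sums_unique[symmetric])
  thus ?thesis by (simp add: cis_conv_exp mult.commute)
qed

lemma amp_rep: "evol E W Q t y z = (\<Sum>l\<in>Lam. cis (t * l) * complex_of_real (q l))"
proof -
  have "evol E W Q t y z = (\<Sum>l\<in>Lam. \<Sum>b\<in>{b\<in>B. lam b = l}. cis (t * lam b) * complex_of_real (b y * b z))"
    unfolding evol_rep using sum.image_gen[OF finB, of "\<lambda>b. cis (t * lam b) * complex_of_real (b y * b z)" lam] by simp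
  also have "\<dots> = (\<Sum>l\<in>Lam. cis (t * l) * complex_of_real (q l))"
    unfolding q_def K_def by (intro sum.cong refl) (simp add: sum_distrib_left)
  finally show ?thesis .
qed

lemma upper: "cmod (evol E W Q t y z) \<le> 2/3"
proof -
  have "cmod (evol E W Q t y z) \<le> (\<Sum>l\<in>Lam. cmod (cis (t * l) * complex_of_real (q l)))"
    unfolding amp_rep by (rule norm_sum)
  also have "\<dots> = (\<Sum>l\<in>Lam. \<bar>q l\<bar>)" by (simp add: norm_mult)
  also have "\<dots> \<le> (\<Sum>l\<in>Lam. Sv l / 9 + Dv l / 6)"
    using Sv_nn Dv_nn by (intro sum_mono) (simp add: q_eq abs_le_iff)
  also have "\<dots> = 2/3" using sum_Sv sum_Dv by (simp add: sum.distrib sum_divide_distrib[symmetric])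
  finally show ?thesis .
qed


lemma regroup_if: "(\<Sum>l\<in>Lam. if l \<ge> c then (\<Sum>b\<in>{b\<in>B. lam b = l}. g b) else 0)
   = (\<Sum>b\<in>B. if lam b \<ge> c then g b else 0)"
proof -
  have "(\<Sum>b\<in>B. if lam b \<ge> c then g b else 0)
     = (\<Sum>l\<in>Lam. \<Sum>b\<in>{b\<in>B. lam b = l}. if lam b \<ge> c then g b else 0)" by (rule regroup[symmetric])
  also have "\<dots> = (\<Sum>l\<in>Lam. if l \<ge> c then (\<Sum>b\<in>{b\<in>B. lam b = l}. g b) else 0)"
    by (intro sum.cong refl) auto
  finally show ?thesis by simp
qed

lemma norm_rest: "cmod (\<Sum>l\<in>M. cis (t * l) * complex_of_real (V l)) \<le> (\<Sum>l\<in>M. \<bar>V l\<bar>)"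
proof -
  have "cmod (\<Sum>l\<in>M. cis (t * l) * complex_of_real (V l)) \<le> (\<Sum>l\<in>M. cmod (cis (t * l) * complex_of_real (V l)))"
    by (rule norm_sum)
  also have "\<dots> = (\<Sum>l\<in>M. \<bar>V l\<bar>)" by (simp add: norm_mult)
  finally show ?thesis .
qed

lemma lower:
  assumes Qb: "Q \<ge> 3 * nn"
  shows "\<exists>t\<ge>0. cmod (evol E W Q t y z) \<ge> 2/3 - 16 * nn\<^sup>2 / (3 * Q\<^sup>2)"
proof -
  have n3: "nn \<ge> 3" by (rule nn_ge3)
  have Qp: "Q > 0" using Qb n3 by simp
  have Q9: "Q\<^sup>2 \<ge> 9 * nn\<^sup>2"
  proof -
    have "(3 * nn)\<^sup>2 \<le> Q\<^sup>2" using Qb n3 by (intro power_mono) auto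
    thus ?thesis by (simp add: power_mult_distrib)
  qed
  have nnp: "nn\<^sup>2 > 0" using n3 by simp
  have Q8: "Q\<^sup>2 > 8 * nn\<^sup>2" using Q9 nnp by linarith
  have Q2p: "Q\<^sup>2 > 0" using Qp by simp
  define \<delta>1 where "\<delta>1 = 12 * nn\<^sup>2 / Q\<^sup>2"
  define \<delta>2 where "\<delta>2 = 8 * nn\<^sup>2 / Q\<^sup>2"
  have Q4: "4 * nn\<^sup>2 < Q\<^sup>2" using Q9 nnp by linarith
  have d1: "\<delta>1 < 3" unfolding \<delta>1_def using Q2p Q4 by (simp add: field_simps)
  have d2: "\<delta>2 < 2" unfolding \<delta>2_def using Q2p Q4 by (simp add: field_simps)
  have suppS: "\<forall>u. u \<notin> W \<longrightarrow> sv u = 0" unfolding sv_def by simp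
  have suppD: "\<forall>u. u \<notin> W \<longrightarrow> dv u = 0" unfolding dv_def by auto
  have concS: "(\<Sum>l\<in>Lam. if l \<ge> -Q/2 then Sv l else 0) \<le> \<delta>1"
  proof -
    have "(\<Sum>l\<in>Lam. if l \<ge> -Q/2 then Sv l else 0) = (\<Sum>b\<in>B. if lam b \<ge> -Q/2 then (ip b sv)\<^sup>2 else 0)"
      unfolding Sv_def ip_sv by (rule regroup_if)
    also have "\<dots> \<le> 4 * nn\<^sup>2 * ip sv sv / Q\<^sup>2" by (rule conc[OF suppS Qp])
    finally show ?thesis unfolding \<delta>1_def ip_sv_sv by simp
  qed
  have concD: "(\<Sum>l\<in>Lam. if l \<ge> -Q/2 then Dv l else 0) \<le> \<delta>2"
  proof -
    have "(\<Sum>l\<in>Lam. if l \<ge> -Q/2 then Dv l else 0) = (\<Sum>b\<in>B. if lam b \<ge> -Q/2 then (ip b dv)\<^sup>2 else 0)"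
      unfolding Dv_def ip_dv by (rule regroup_if)
    also have "\<dots> \<le> 4 * nn\<^sup>2 * ip dv dv / Q\<^sup>2" by (rule conc[OF suppD Qp])
    finally show ?thesis unfolding \<delta>2_def ip_dv_dv by simp
  qed
  obtain \<alpha> where a: "\<alpha> \<in> Lam" "\<alpha> < -Q/2" "Sv \<alpha> > 0" "(\<Sum>l\<in>Lam-{\<alpha>}. Sv l) \<le> \<delta>1"
    using pick[of Lam Sv 3 "-Q/2" \<delta>1] finB Sv_nn sum_Sv concS d1 uniqS[OF Qp Q8] by blast
  obtain \<beta> where b: "\<beta> \<in> Lam" "\<beta> < -Q/2" "Dv \<beta> > 0" "(\<Sum>l\<in>Lam-{\<beta>}. Dv l) \<le> \<delta>2"
    using pick[of Lam Dv 2 "-Q/2" \<delta>2] finB Dv_nn sum_Dv concD d2 uniqD[OF Qp Q8] by blast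
  have ab: "\<alpha> \<noteq> \<beta>"
  proof
    assume "\<alpha> = \<beta>"
    thus False using distinct_SD[of \<alpha>] a b Qp by simp
  qed
  define t where "t = pi / \<bar>\<alpha> - \<beta>\<bar>"
  have tp: "t > 0" unfolding t_def using ab by simp
  have cb: "cis (t * \<beta>) = - cis (t * \<alpha>)"
  proof -
    have "t * \<beta> = t * \<alpha> + t * (\<beta> - \<alpha>)" by (simp add: algebra_simps)
    moreover have "cis (t * (\<beta> - \<alpha>)) = -1"
    proof (cases "\<beta> > \<alpha>")
      case True
      hence "t * (\<beta> - \<alpha>) = pi" unfolding t_def by simp
      thus ?thesis by simp
    next
      case False
      hence "\<beta> < \<alpha>" using ab by simp
      hence "t * (\<beta> - \<alpha>) = - pi" unfolding t_def by (simp add: field_simps)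
      thus ?thesis by (simp add: complex_eq_iff)
    qed
    ultimately show ?thesis by (simp add: cis_mult[symmetric])
  qed
  define R1 where "R1 = (\<Sum>l\<in>Lam-{\<alpha>}. cis (t * l) * complex_of_real (Sv l))"
  define R2 where "R2 = (\<Sum>l\<in>Lam-{\<beta>}. cis (t * l) * complex_of_real (Dv l))"
  have SS: "(\<Sum>l\<in>Lam. cis (t * l) * complex_of_real (Sv l)) = cis (t * \<alpha>) * complex_of_real (Sv \<alpha>) + R1"
    unfolding R1_def using finB a(1) by (simp add: sum.remove)
  have DD: "(\<Sum>l\<in>Lam. cis (t * l) * complex_of_real (Dv l)) = cis (t * \<beta>) * complex_of_real (Dv \<beta>) + R2"
    unfolding R2_def using finB b(1) by (simp add: sum.remove)
  have nR1: "cmod R1 \<le> \<delta>1" unfolding R1_def using norm_rest[where t=t and M="Lam-{\<alpha>}" and V=Sv] Sv_nn a(4) by simp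
  have nR2: "cmod R2 \<le> \<delta>2" unfolding R2_def using norm_rest[where t=t and M="Lam-{\<beta>}" and V=Dv] Dv_nn b(4) by simp
  have Sa: "Sv \<alpha> \<ge> 3 - \<delta>1"
  proof -
    have "(\<Sum>l\<in>Lam. Sv l) = Sv \<alpha> + (\<Sum>l\<in>Lam-{\<alpha>}. Sv l)" using finB a(1) by (simp add: sum.remove)
    thus ?thesis using sum_Sv a(4) by simp
  qed
  have Db: "Dv \<beta> \<ge> 2 - \<delta>2"
  proof -
    have "(\<Sum>l\<in>Lam. Dv l) = Dv \<beta> + (\<Sum>l\<in>Lam-{\<beta>}. Dv l)" using finB b(1) by (simp add: sum.remove)
    thus ?thesis using sum_Dv b(4) by simp
  qed
  have A: "evol E W Q t y z = cis (t * \<alpha>) * complex_of_real (Sv \<alpha> / 9 + Dv \<beta> / 6) + (R1 / 9 - R2 / 6)"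
  proof -
    have "evol E W Q t y z = (\<Sum>l\<in>Lam. cis (t * l) * complex_of_real (Sv l)) / 9
        - (\<Sum>l\<in>Lam. cis (t * l) * complex_of_real (Dv l)) / 6"
      unfolding amp_rep q_eq
      by (simp add: sum_divide_distrib sum_subtractf[symmetric] algebra_simps)
    also have "\<dots> = cis (t * \<alpha>) * complex_of_real (Sv \<alpha> / 9 + Dv \<beta> / 6) + (R1 / 9 - R2 / 6)"
      unfolding SS DD cb by (simp add: field_simps)
    finally show ?thesis .
  qed
  have "cmod (evol E W Q t y z) \<ge> cmod (cis (t * \<alpha>) * complex_of_real (Sv \<alpha> / 9 + Dv \<beta> / 6)) - cmod (R1 / 9 - R2 / 6)"
    unfolding A by (rule norm_diff_ineq)
  moreover have "cmod (cis (t * \<alpha>) * complex_of_real (Sv \<alpha> / 9 + Dv \<beta> / 6)) = Sv \<alpha> / 9 + Dv \<beta> / 6"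
  proof -
    define r where "r = Sv \<alpha> / 9 + Dv \<beta> / 6"
    have "r \<ge> 0" unfolding r_def using a(3) b(3) by simp
    hence "cmod (cis (t * \<alpha>) * complex_of_real r) = r" by (simp add: norm_mult)
    thus ?thesis unfolding r_def .
  qed
  moreover have "cmod (R1 / 9 - R2 / 6) \<le> \<delta>1 / 9 + \<delta>2 / 6"
  proof -
    have "cmod (R1 / 9 - R2 / 6) \<le> cmod (R1 / 9) + cmod (R2 / 6)" by (rule norm_triangle_ineq4)
    also have "\<dots> = cmod R1 / 9 + cmod R2 / 6" by (simp add: norm_divide)
    finally show ?thesis using nR1 nR2 by simp
  qed
  ultimately have "cmod (evol E W Q t y z) \<ge> (3 - \<delta>1) / 9 + (2 - \<delta>2) / 6 - (\<delta>1 / 9 + \<delta>2 / 6)"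
    using Sa Db by (smt (verit) divide_right_mono)
  also have "(3 - \<delta>1) / 9 + (2 - \<delta>2) / 6 - (\<delta>1 / 9 + \<delta>2 / 6) = 2/3 - 16 * nn\<^sup>2 / (3 * Q\<^sup>2)"
    unfolding \<delta>1_def \<delta>2_def using Q2p by (simp add: field_simps)
  finally show ?thesis using tp by (intro exI[of _ t]) auto
qed

end

context tun begin

lemma get_spec: "\<exists>B lam. spec E x y z \<tau> Q B lam"
proof -
  obtain B lam where B: "finite B" "\<forall>b\<in>B. \<forall>c\<in>B. ip b c = (if b = c then 1 else 0)"
     "\<forall>b\<in>B. mv (h Q) b = (\<lambda>i. lam b * b i)" "\<forall>f. f = (\<lambda>i. \<Sum>b\<in>B. ip b f * b i)"
    using spectral_fun[of "h Q"] h_sym by blast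
  have "spec E x y z \<tau> Q B lam" unfolding spec_def spec_axioms_def using tun_axioms B by blast
  thus ?thesis by blast
qed

lemma upper_all: "cmod (evol E W Q t y z) \<le> 2/3"
proof -
  obtain B lam where "spec E x y z \<tau> Q B lam" using get_spec by blast
  then interpret spec E x y z \<tau> Q B lam .
  show ?thesis by (rule upper)
qed

lemma lower_all: "Q \<ge> 3 * nn \<Longrightarrow> \<exists>t\<ge>0. cmod (evol E W Q t y z) \<ge> 2/3 - 16 * nn\<^sup>2 / (3 * Q\<^sup>2)"
proof -
  assume Q: "Q \<ge> 3 * nn"
  obtain B lam where "spec E x y z \<tau> Q B lam" using get_spec by blast
  then interpret spec E x y z \<tau> Q B lam .
  show ?thesis using lower[OF Q] .
qed

lemma TC_val: "TC E W y z = ereal (4/9)"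
proof -
  define f where "f Q = (SUP t\<in>{0..}. ereal ((cmod (evol E W Q t y z))\<^sup>2))" for Q
  have TCf: "TC E W y z = Liminf at_top f" unfolding TC_def f_def by simp
  have up: "f Q \<le> ereal (4/9)" for Q
    unfolding f_def
  proof (rule SUP_least)
    fix t :: real
    have "(cmod (evol E W Q t y z))\<^sup>2 \<le> (2/3)\<^sup>2" using upper_all by (intro power_mono) auto
    thus "ereal ((cmod (evol E W Q t y z))\<^sup>2) \<le> ereal (4/9)" by (simp add: power2_eq_square)
  qed
  have "Liminf at_top f \<le> Limsup at_top f" by (rule Liminf_le_Limsup) simp
  also have "Limsup at_top f \<le> ereal (4/9)" by (rule Limsup_bounded) (simp add: up)
  finally have le: "Liminf at_top f \<le> ereal (4/9)" .
  have low: "ereal (4/9 - e) \<le> Liminf at_top f" if e: "e > 0" for e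
  proof (rule Liminf_bounded)
    have n3: "nn \<ge> 3" by (rule nn_ge3)
    define K where "K = 64 * nn\<^sup>2 / (9 * e)"
    have K0: "K \<ge> 0" unfolding K_def using e by simp
    define N where "N = max (3 * nn) (sqrt K + 1)"
    have "ereal (4/9 - e) \<le> f Q" if Q: "Q \<ge> N" for Q
    proof -
      have Q3: "Q \<ge> 3 * nn" using Q unfolding N_def by simp
      have Qp: "Q > 0" using Q3 n3 by simp
      have "sqrt K < Q" using Q unfolding N_def by simp
      hence "(sqrt K)\<^sup>2 < Q\<^sup>2" using K0 by (intro power_strict_mono) auto
      hence QK: "K < Q\<^sup>2" using K0 by simp
      have Q9: "Q\<^sup>2 \<ge> 9 * nn\<^sup>2"
      proof -
        have "(3 * nn)\<^sup>2 \<le> Q\<^sup>2" using Q3 n3 by (intro power_mono) auto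
        thus ?thesis by (simp add: power_mult_distrib)
      qed
      define d where "d = 16 * nn\<^sup>2 / (3 * Q\<^sup>2)"
      have d0: "d \<ge> 0" unfolding d_def by simp
      have Q8: "8 * nn\<^sup>2 \<le> Q\<^sup>2" using Q9 by (smt (verit) zero_le_power2)
      have d1: "d \<le> 2/3" unfolding d_def using Q8 Qp by (simp add: field_simps)
      have d2: "d \<le> 3 * e / 4"
      proof -
        have "64 * nn\<^sup>2 \<le> Q\<^sup>2 * (9 * e)" using QK e unfolding K_def by (simp add: field_simps)
        thus ?thesis unfolding d_def using Qp e by (simp add: field_simps)
      qed
      obtain t where t: "t \<ge> 0" "cmod (evol E W Q t y z) \<ge> 2/3 - d"
        using lower_all[OF Q3] unfolding d_def by blast
      have "(2/3 - d)\<^sup>2 \<le> (cmod (evol E W Q t y z))\<^sup>2" using t(2) d1 by (intro power_mono) auto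
      moreover have "4/9 - e \<le> (2/3 - d)\<^sup>2"
      proof -
        have "(2/3 - d)\<^sup>2 = 4/9 - 4/3 * d + d\<^sup>2" by (simp add: power2_eq_square field_simps)
        moreover have "4/3 * d \<le> e" using d2 by simp
        moreover have "d\<^sup>2 \<ge> 0" by simp
        ultimately show ?thesis by linarith
      qed
      ultimately have "4/9 - e \<le> (cmod (evol E W Q t y z))\<^sup>2" by (rule order_trans[rotated])
      hence "ereal (4/9 - e) \<le> ereal ((cmod (evol E W Q t y z))\<^sup>2)" by (simp only: ereal_less_eq)
      also have "\<dots> \<le> f Q" unfolding f_def using t(1) by (intro SUP_upper) auto
      finally show ?thesis .
    qed
    thus "\<forall>\<^sub>F Q in at_top. ereal (4/9 - e) \<le> f Q" unfolding eventually_at_top_linorder by blast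
  qed
  have ge: "ereal (4/9) \<le> Liminf at_top f"
  proof (rule ereal_le_epsilon2)
    fix e :: real assume e: "0 < e"
    have "ereal (4/9) = ereal (4/9 - e) + ereal e" by simp
    also have "\<dots> \<le> Liminf at_top f + ereal e" using low[OF e] by (intro add_right_mono)
    finally show "ereal (4/9) \<le> Liminf at_top f + ereal e" .
  qed
  show ?thesis using le ge TCf by simp
qed

end

theorem lemma5:
  fixes E :: "'a::finite \<Rightarrow> 'a \<Rightarrow> bool" and x y z :: 'a and \<sigma> :: "'a \<Rightarrow> 'a"
  assumes "simple_graph E" and "graph_connected E"
    and "x \<noteq> y" and "y \<noteq> z" and "x \<noteq> z"
    and "graph_aut E \<sigma>" and "\<sigma> \<circ> \<sigma> \<circ> \<sigma> = id" and "\<sigma> \<noteq> id"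
    and "(\<sigma> x = y \<and> \<sigma> y = z \<and> \<sigma> z = x) \<or> (\<sigma> x = z \<and> \<sigma> z = y \<and> \<sigma> y = x)"
  shows "TC E {x, y, z} y z \<noteq> 1 \<and> TC E {x, y, z} y z = ereal (4/9)"
proof -
  obtain \<tau> where tau: "graph_aut E \<tau>" "\<tau> x = y" "\<tau> y = z" "\<tau> z = x"
  proof (cases "\<sigma> x = y \<and> \<sigma> y = z \<and> \<sigma> z = x")
    case True thus ?thesis using that assms(6) by blast
  next
    case False
    hence c2: "\<sigma> x = z" "\<sigma> z = y" "\<sigma> y = x" using assms(9) by auto
    have "graph_aut E (\<sigma> \<circ> \<sigma>)"
      using assms(6) unfolding graph_aut_def by (auto intro: bij_comp)
    moreover have "(\<sigma> \<circ> \<sigma>) x = y" "(\<sigma> \<circ> \<sigma>) y = z" "(\<sigma> \<circ> \<sigma>) z = x" using c2 by auto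
    ultimately show ?thesis using that by blast
  qed
  interpret tun E x y z \<tau>
    using assms(1-5) tau by unfold_locales
  have "TC E {x, y, z} y z = ereal (4/9)" by (rule TC_val)
  thus ?thesis by (simp add: one_ereal_def)
qed



end
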